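(* Let $n,M$ be positive integers and $\epsilon\in[0,1]$. Every $(n,M,\epsilon)$-FLF code for the CM-DMBC, with encoding functions $f_1,\dots,f_n$, satisfies, for every $\lambda>0$, $$\epsilon\ \ge\ \frac12\,\mathbb P\Big[\sum_{k=1}^2\eta_k\sum_{i=1}^n \imath_{P^*,W_k}\big(f_i(J,Y_1^{i-1},Y_2^{i-1});Y_{k,i}\big)\le \log M-\lambda\Big]-e^{-\lambda},$$ where the probability is computed under the distribution $$\mathbb P_{J,Y_1^n,Y_2^n}(j,y_1^n,y_2^n)=\frac1M\prod_{i=1}^n\prod_{k=1}^2 W_k\big(y_{k,i}\,\big|\,f_i(j,y_1^{i-1},y_2^{i-1})\big).$$
   Context: Setting: finite alphabets $\mathcal X=\{1,\dots,N\}$, $\mathcal Y$; transition matrices $W_1,W_2$ from $\mathcal X$ to $\mathcal Y$. The common-message discrete memoryless broadcast channel (CM-DMBC) has, at each time, outputs $(y_1,y_2)$ with probability $W_1(y_1|x)W_2(y_2|x)$ given input $x$, independently over time. For a distribution $P$ on $\mathcal X$: $PW_k(y)=\sum_xP(x)W_k(y|x)$, $\imath_{P,W_k}(x;y)=\log\frac{W_k(y|x)}{PW_k(y)}$ (natural log), $I_k(P)=\sum_xP(x)D(W_k(\cdot|x)\|PW_k)$, $V_k(P)=\sum_xP(x)\mathrm{Var}[\imath_{P,W_k}(x;Y_k)]$ with $Y_k\sim W_k(\cdot|x)$. $C=\max_P\min_kI_k(P)$, $C_k=\max_PI_k(P)$. Standing assumptions: the maximizer $P^*$ of $\min_kI_k$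 is unique, $P^*(x)>0$ for all $x$, $V_k(P^* )>0$ and $C_k>C$ for $k=1,2$. Let $P^*_{Y_k}=P^*W_k$ and for $\mathbf v\in\mathbb R^N$ with entries summing to zero, $\mathrm dI_k(\mathbf v)=\sum_xv_xD(W_k(\cdot|x)\|P^*_{Y_k})$. $\eta\in(0,1)$ is the unique constant with $\eta\,\mathrm dI_1(\mathbf v)+(1-\eta)\mathrm dI_2(\mathbf v)=0$ for all such $\mathbf v$; $\eta_1=\eta$, $\eta_2=1-\eta$. An $(n,M,\epsilon)$-FLF (fixed-length feedback) code consists of encoding functions $f_i:\{1,\dots,M\}\times\mathcal Y^{i-1}\times\mathcal Y^{i-1}\to\mathcal X$, $i=1,\dots,n$, producing $X_i=f_i(J,Y_1^{i-1},Y_2^{i-1})$ where the message $J$ is uniform on $\{1,\dots,M\}$, and decoders $g_k:\mathcal Y^n\to\{1,\dots,M\}$ with $\mathbb P[g_k(Y_k^n)\ne J]\le\epsilon$ for $k=1,2$. *)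

theory Defs
  imports "HOL-Analysis.Analysis"
begin

text \<open>Finite alphabets are finite types 'x (input) and 'y (output).
  A transition matrix is W :: 'x => 'y => real, W x y = W(y|x).\<close>

definition stochastic :: "('x::finite \<Rightarrow> 'y::finite \<Rightarrow> real) \<Rightarrow> bool" where
  "stochastic W \<longleftrightarrow> (\<forall>x y. 0 \<le> W x y) \<and> (\<forall>x. (\<Sum>y\<in>UNIV. W x y) = 1)"

definition is_dist :: "('a::finite \<Rightarrow> real) \<Rightarrow> bool" where
  "is_dist P \<longleftrightarrow> (\<forall>a. 0 \<le> P a) \<and> (\<Sum>a\<in>UNIV. P a) = 1"

definition out_dist :: "('x::finite \<Rightarrow> real) \<Rightarrow> ('x \<Rightarrow> 'y \<Rightarrow> real) \<Rightarrow> 'y \<Rightarrow> real" where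
  "out_dist P W y = (\<Sum>x\<in>UNIV. P x * W x y)"

definition info_dens :: "('x::finite \<Rightarrow> real) \<Rightarrow> ('x \<Rightarrow> 'y \<Rightarrow> real) \<Rightarrow> 'x \<Rightarrow> 'y \<Rightarrow> real" where
  "info_dens P W x y = ln (W x y / out_dist P W y)"

definition KL :: "('y::finite \<Rightarrow> real) \<Rightarrow> ('y \<Rightarrow> real) \<Rightarrow> real" where
  "KL p q = (\<Sum>y\<in>UNIV. if p y = 0 then 0 else p y * ln (p y / q y))"

definition mutual_info :: "('x::finite \<Rightarrow> real) \<Rightarrow> ('x \<Rightarrow> 'y::finite \<Rightarrow> real) \<Rightarrow> real" where
  "mutual_info P W = (\<Sum>x\<in>UNIV. P x * KL (W x) (out_dist P W))"

definition disp :: "('x::finite \<Rightarrow> real) \<Rightarrow> ('x \<Rightarrow> 'y::finite \<Rightarrow> real) \<Rightarrow> real" where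
  "disp P W = (\<Sum>x\<in>UNIV. P x *
     (\<Sum>y\<in>UNIV. if W x y = 0 then 0
        else W x y * (info_dens P W x y - KL (W x) (out_dist P W))\<^sup>2))"

definition capacity :: "('x::finite \<Rightarrow> 'y::finite \<Rightarrow> real) \<Rightarrow> real" where
  "capacity W = (SUP P\<in>{P. is_dist P}. mutual_info P W)"

definition unique_maxmin :: "('x::finite \<Rightarrow> 'y::finite \<Rightarrow> real) \<Rightarrow> ('x \<Rightarrow> 'y \<Rightarrow> real) \<Rightarrow> ('x \<Rightarrow> real) \<Rightarrow> bool" where
  "unique_maxmin W1 W2 Ps \<longleftrightarrow> is_dist Ps \<and>
     (\<forall>P. is_dist P \<longrightarrow> min (mutual_info P W1) (mutual_info P W2) \<le> min (mutual_info Ps W1) (mutual_info Ps W2)) \<and>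
     (\<forall>P. is_dist P \<and> min (mutual_info P W1) (mutual_info P W2) = min (mutual_info Ps W1) (mutual_info Ps W2) \<longrightarrow> P = Ps)"

definition dI :: "('x::finite \<Rightarrow> real) \<Rightarrow> ('x \<Rightarrow> 'y::finite \<Rightarrow> real) \<Rightarrow> ('x \<Rightarrow> real) \<Rightarrow> real" where
  "dI Ps W v = (\<Sum>x\<in>UNIV. v x * KL (W x) (out_dist Ps W))"

text \<open>Messages are 1..M. Time indices are 0..n-1 (time i+1 in the paper);
  the encoder at index i gets the past outputs as lists of length i.
  f :: time => message => past Y1 => past Y2 => input.\<close>
definition joint :: "nat \<Rightarrow> nat \<Rightarrow> ('x \<Rightarrow> 'y \<Rightarrow> real) \<Rightarrow> ('x \<Rightarrow> 'y \<Rightarrow> real)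
    \<Rightarrow> (nat \<Rightarrow> nat \<Rightarrow> 'y list \<Rightarrow> 'y list \<Rightarrow> 'x) \<Rightarrow> nat \<Rightarrow> 'y list \<Rightarrow> 'y list \<Rightarrow> real" where
  "joint n M W1 W2 f j y1 y2 = (1 / real M) *
     (\<Prod>i<n. W1 (f i j (take i y1) (take i y2)) (y1 ! i) * W2 (f i j (take i y1) (take i y2)) (y2 ! i))"

definition code_prob :: "nat \<Rightarrow> nat \<Rightarrow> ('x \<Rightarrow> 'y::finite \<Rightarrow> real) \<Rightarrow> ('x \<Rightarrow> 'y \<Rightarrow> real)
    \<Rightarrow> (nat \<Rightarrow> nat \<Rightarrow> 'y list \<Rightarrow> 'y list \<Rightarrow> 'x) \<Rightarrow> (nat \<Rightarrow> 'y list \<Rightarrow> 'y list \<Rightarrow> bool) \<Rightarrow> real" where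
  "code_prob n M W1 W2 f E = (\<Sum>j\<in>{1..M}. \<Sum>y1\<in>{ys. length ys = n}. \<Sum>y2\<in>{ys. length ys = n}.
      if E j y1 y2 then joint n M W1 W2 f j y1 y2 else 0)"

definition FLF_code :: "nat \<Rightarrow> nat \<Rightarrow> real \<Rightarrow> ('x \<Rightarrow> 'y::finite \<Rightarrow> real) \<Rightarrow> ('x \<Rightarrow> 'y \<Rightarrow> real)
    \<Rightarrow> (nat \<Rightarrow> nat \<Rightarrow> 'y list \<Rightarrow> 'y list \<Rightarrow> 'x) \<Rightarrow> ('y list \<Rightarrow> nat) \<Rightarrow> ('y list \<Rightarrow> nat) \<Rightarrow> bool" where
  "FLF_code n M eps W1 W2 f g1 g2 \<longleftrightarrow>
     (\<forall>ys. length ys = n \<longrightarrow> g1 ys \<in> {1..M} \<and> g2 ys \<in> {1..M}) \<and>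
     code_prob n M W1 W2 f (\<lambda>j y1 y2. g1 y1 \<noteq> j) \<le> eps \<and>
     code_prob n M W1 W2 f (\<lambda>j y1 y2. g2 y2 \<noteq> j) \<le> eps"

end

theory Submission
  imports Defs
begin

lemma lists_Suc_eq:
  "{ys::'a list. length ys = Suc n} = (\<lambda>(a,r). a#r) ` (UNIV \<times> {ys. length ys = n})"
  by (auto simp: image_iff length_Suc_conv)

lemma causal_sum:
  fixes p :: "nat \<Rightarrow> 'y list \<Rightarrow> 'y::finite \<Rightarrow> real"
  assumes "\<And>i r. (\<Sum>a\<in>UNIV. p i r a) = 1"
  shows "(\<Sum>ys\<in>{ys. length ys = n}. \<Prod>i<n. p i (take i ys) (ys ! i)) = 1"
  using assms
proof (induction n arbitrary: p)
  case 0
  have "{ys::'y list. length ys = 0} = {[]}" by auto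
  then show ?case by simp
next
  case (Suc n)
  have inj: "inj_on (\<lambda>(a,r). a#r) (UNIV \<times> {ys::'y list. length ys = n})"
    by (auto simp: inj_on_def)
  have IH: "(\<Sum>r\<in>{ys. length ys = n}. \<Prod>i<n. p (Suc i) (a # take i r) (r ! i)) = 1" for a
    using Suc.IH[of "\<lambda>i r. p (Suc i) (a # r)"] Suc.prems by simp
  have "(\<Sum>ys\<in>{ys. length ys = Suc n}. \<Prod>i<Suc n. p i (take i ys) (ys ! i))
      = (\<Sum>(a,r)\<in>UNIV \<times> {ys. length ys = n}. \<Prod>i<Suc n. p i (take i (a#r)) ((a#r) ! i))"
    unfolding lists_Suc_eq by (subst sum.reindex[OF inj]) (simp add: case_prod_beta)
  also have "\<dots> = (\<Sum>a\<in>UNIV. \<Sum>r\<in>{ys. length ys = n}. p 0 [] a * (\<Prod>i<n. p (Suc i) (a # take i r) (r ! i)))"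
    unfolding prod.lessThan_Suc_shift by (subst sum.cartesian_product[symmetric]) simp
  also have "\<dots> = (\<Sum>a\<in>UNIV. p 0 [] a)"
    by (simp add: sum_distrib_left[symmetric] IH)
  finally show ?case using Suc.prems by simp
qed

lemma out_dist_sum:
  assumes "stochastic W" "is_dist P"
  shows "(\<Sum>a\<in>UNIV. out_dist P W a) = 1"
proof -
  have "(\<Sum>a\<in>UNIV. out_dist P W a) = (\<Sum>x\<in>UNIV. P x * (\<Sum>a\<in>UNIV. W x a))"
    unfolding out_dist_def by (subst sum.swap) (simp add: sum_distrib_left)
  also have "\<dots> = 1" using assms by (simp add: stochastic_def is_dist_def)
  finally show ?thesis .
qed

lemma term_bound:
  fixes Wa Wb :: "'x::finite \<Rightarrow> 'y::finite \<Rightarrow> real" and xs :: "nat \<Rightarrow> 'x"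
  assumes Wa: "stochastic Wa" and Wb: "stochastic Wb" and Ps: "\<forall>x. Ps x > 0" and M: "M > 0"
    and S: "(\<Sum>i<n. info_dens Ps Wa (xs i) (ya ! i)) \<le> ln (real M) - lam"
  shows "1 / real M * ((\<Prod>i<n. Wa (xs i) (ya!i)) * (\<Prod>i<n. Wb (xs i) (yb!i)))
     \<le> exp (-lam) * (\<Prod>i<n. out_dist Ps Wa (ya!i)) * (\<Prod>i<n. Wb (xs i) (yb!i))"
proof -
  define A where "A = (\<Prod>i<n. Wa (xs i) (ya!i))"
  define B where "B = (\<Prod>i<n. Wb (xs i) (yb!i))"
  define Q where "Q = (\<Prod>i<n. out_dist Ps Wa (ya!i))"
  have odnn: "out_dist Ps Wa y \<ge> 0" for y
    using Wa Ps unfolding out_dist_def stochastic_def by (auto intro!: sum_nonneg mult_nonneg_nonneg simp: less_imp_le)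
  have A0: "A \<ge> 0" using Wa unfolding A_def stochastic_def by (auto intro: prod_nonneg)
  have B0: "B \<ge> 0" using Wb unfolding B_def stochastic_def by (auto intro: prod_nonneg)
  have Q0: "Q \<ge> 0" unfolding Q_def using odnn by (auto intro: prod_nonneg)
  show ?thesis
  proof (cases "A = 0")
    case True
    then show ?thesis using B0 Q0 unfolding A_def[symmetric] B_def[symmetric] Q_def[symmetric]
      by simp
  next
    case False
    have wpos: "Wa (xs i) (ya!i) > 0" if "i < n" for i
    proof -
      have "Wa (xs i) (ya!i) \<noteq> 0" using False that unfolding A_def by auto
      moreover have "Wa (xs i) (ya!i) \<ge> 0" using Wa by (simp add: stochastic_def)
      ultimately show ?thesis by simp
    qed
    have qpos: "out_dist Ps Wa (ya!i) > 0" if "i < n" for i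
    proof -
      have "Ps (xs i) * Wa (xs i) (ya!i) > 0" using Ps wpos[OF that] by simp
      also have "Ps (xs i) * Wa (xs i) (ya!i) \<le> out_dist Ps Wa (ya!i)"
        unfolding out_dist_def
        by (rule member_le_sum[where f="\<lambda>x. Ps x * Wa x (ya!i)"]) (use Ps Wa in \<open>auto simp: stochastic_def less_imp_le\<close>)
      finally show ?thesis .
    qed
    have Qpos: "Q > 0" unfolding Q_def using qpos by (auto intro: prod_pos)
    have "exp (\<Sum>i<n. info_dens Ps Wa (xs i) (ya ! i)) = (\<Prod>i<n. Wa (xs i) (ya!i) / out_dist Ps Wa (ya!i))"
      unfolding exp_sum[OF finite_lessThan] info_dens_def
      by (rule prod.cong) (use wpos qpos in auto)
    also have "\<dots> = A / Q" unfolding A_def Q_def by (simp add: prod_dividef)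
    finally have eA: "exp (\<Sum>i<n. info_dens Ps Wa (xs i) (ya ! i)) = A / Q" .
    have "A / Q \<le> exp (ln (real M) - lam)" unfolding eA[symmetric] using S by simp
    also have "\<dots> = real M * exp (-lam)" using M by (simp add: exp_diff exp_minus field_simps)
    finally have "A \<le> real M * exp (-lam) * Q" using Qpos by (simp add: divide_le_eq)
    hence "1 / real M * (A * B) \<le> 1 / real M * (real M * exp (-lam) * Q * B)"
      using B0 M by (intro mult_left_mono mult_right_mono) auto
    also have "\<dots> = exp (-lam) * Q * B" using M by simp
    finally show ?thesis unfolding A_def B_def Q_def .
  qed
qed

theorem theorem1:
  fixes W1 W2 :: "'x::finite \<Rightarrow> 'y::finite \<Rightarrow> real"
    and Ps :: "'x \<Rightarrow> real" and \<eta> :: real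
    and n M :: nat and eps lam :: real
    and f :: "nat \<Rightarrow> nat \<Rightarrow> 'y list \<Rightarrow> 'y list \<Rightarrow> 'x"
    and g1 g2 :: "'y list \<Rightarrow> nat"
  assumes W1: "stochastic W1" and W2: "stochastic W2"
    and Ps_max: "unique_maxmin W1 W2 Ps"
    and Ps_pos: "\<forall>x. Ps x > 0"
    and V1: "disp Ps W1 > 0" and V2: "disp Ps W2 > 0"
    and C1: "capacity W1 > min (mutual_info Ps W1) (mutual_info Ps W2)"
    and C2: "capacity W2 > min (mutual_info Ps W1) (mutual_info Ps W2)"
    and eta: "0 < \<eta>" "\<eta> < 1"
    and eta_def: "\<forall>v. (\<Sum>x\<in>UNIV. v x) = 0 \<longrightarrow> \<eta> * dI Ps W1 v + (1 - \<eta>) * dI Ps W2 v = 0"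
    and n: "n > 0" and M: "M > 0"
    and eps: "0 \<le> eps" "eps \<le> 1"
    and code: "FLF_code n M eps W1 W2 f g1 g2"
    and lam: "lam > 0"
  shows "eps \<ge> 1/2 * code_prob n M W1 W2 f
            (\<lambda>j y1 y2. \<eta> * (\<Sum>i<n. info_dens Ps W1 (f i j (take i y1) (take i y2)) (y1 ! i))
                    + (1 - \<eta>) * (\<Sum>i<n. info_dens Ps W2 (f i j (take i y1) (take i y2)) (y2 ! i))
                    \<le> ln (real M) - lam)
          - exp (- lam)"
proof -
  define LN where "LN = {ys :: 'y list. length ys = n}"
  define J where "J = joint n M W1 W2 f"
  define S1 where "S1 j y1 y2 = (\<Sum>i<n. info_dens Ps W1 (f i j (take i y1) (take i y2)) (y1 ! i))" for j y1 y2
  define S2 where "S2 j y1 y2 = (\<Sum>i<n. info_dens Ps W2 (f i j (take i y1) (take i y2)) (y2 ! i))" for j y1 y2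
  define L where "L = ln (real M) - lam"
  define B1 where "B1 j y1 y2 = (\<Prod>i<n. W1 (f i j (take i y1) (take i y2)) (y1 ! i))" for j y1 y2
  define B2 where "B2 j y1 y2 = (\<Prod>i<n. W2 (f i j (take i y1) (take i y2)) (y2 ! i))" for j y1 y2
  define Q1 where "Q1 y1 = (\<Prod>i<n. out_dist Ps W1 (y1 ! i))" for y1
  define Q2 where "Q2 y2 = (\<Prod>i<n. out_dist Ps W2 (y2 ! i))" for y2
  define e where "e = exp (-lam)"
  have isd: "is_dist Ps" using Ps_max by (simp add: unique_maxmin_def)
  have Jsplit: "J j y1 y2 = 1 / real M * (B1 j y1 y2 * B2 j y1 y2)" for j y1 y2
    unfolding J_def joint_def B1_def B2_def by (simp add: prod.distrib)
  have B1nn: "B1 j y1 y2 \<ge> 0" for j y1 y2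
    using W1 unfolding B1_def stochastic_def by (auto intro: prod_nonneg)
  have B2nn: "B2 j y1 y2 \<ge> 0" for j y1 y2
    using W2 unfolding B2_def stochastic_def by (auto intro: prod_nonneg)
  have J0: "J j y1 y2 \<ge> 0" for j y1 y2
    unfolding Jsplit using B1nn B2nn by simp
  have odnn: "out_dist Ps W y \<ge> 0" if "stochastic W" for W :: "'x \<Rightarrow> 'y \<Rightarrow> real" and y
    using that Ps_pos unfolding out_dist_def stochastic_def
    by (auto intro!: sum_nonneg mult_nonneg_nonneg simp: less_imp_le)
  have Q1nn: "Q1 y \<ge> 0" for y unfolding Q1_def using odnn[OF W1] by (auto intro: prod_nonneg)
  have Q2nn: "Q2 y \<ge> 0" for y unfolding Q2_def using odnn[OF W2] by (auto intro: prod_nonneg)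
  have sB1: "(\<Sum>y1\<in>LN. B1 j y1 y2) = 1" for j y2
    unfolding LN_def B1_def
    using causal_sum[where p="\<lambda>i r a. W1 (f i j r (take i y2)) a" and n=n] W1
    by (simp add: stochastic_def)
  have sB2: "(\<Sum>y2\<in>LN. B2 j y1 y2) = 1" for j y1
    unfolding LN_def B2_def
    using causal_sum[where p="\<lambda>i r a. W2 (f i j (take i y1) r) a" and n=n] W2
    by (simp add: stochastic_def)
  have sQ1: "(\<Sum>y\<in>LN. Q1 y) = 1"
    unfolding LN_def Q1_def
    using causal_sum[where p="\<lambda>i r a. out_dist Ps W1 a" and n=n] out_dist_sum[OF W1 isd]
    by simp
  have sQ2: "(\<Sum>y\<in>LN. Q2 y) = 1"
    unfolding LN_def Q2_def
    using causal_sum[where p="\<lambda>i r a. out_dist Ps W2 a" and n=n] out_dist_sum[OF W2 isd]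
    by simp
  have cp: "code_prob n M W1 W2 f E = (\<Sum>j\<in>{1..M}. \<Sum>y1\<in>LN. \<Sum>y2\<in>LN. if E j y1 y2 then J j y1 y2 else 0)" for E
    unfolding code_prob_def LN_def J_def ..
  have pb1: "(if S1 j y1 y2 \<le> L \<and> g1 y1 = j then J j y1 y2 else 0)
      \<le> (if g1 y1 = j then e * Q1 y1 * B2 j y1 y2 else 0)" for j y1 y2
  proof (cases "S1 j y1 y2 \<le> L \<and> g1 y1 = j")
    case True
    have "1 / real M * (B1 j y1 y2 * B2 j y1 y2) \<le> e * Q1 y1 * B2 j y1 y2"
      unfolding B1_def B2_def Q1_def e_def
      by (rule term_bound[OF W1 W2 Ps_pos M]) (use True in \<open>simp add: S1_def L_def\<close>)
    then show ?thesis using True by (simp add: Jsplit)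
  next
    case False
    then show ?thesis using Q1nn B2nn lam by (simp add: e_def)
  qed
  have pb2: "(if S2 j y1 y2 \<le> L \<and> g2 y2 = j then J j y1 y2 else 0)
      \<le> (if g2 y2 = j then e * Q2 y2 * B1 j y1 y2 else 0)" for j y1 y2
  proof (cases "S2 j y1 y2 \<le> L \<and> g2 y2 = j")
    case True
    have "1 / real M * (B2 j y1 y2 * B1 j y1 y2) \<le> e * Q2 y2 * B1 j y1 y2"
      unfolding B1_def B2_def Q2_def e_def
      by (rule term_bound[OF W2 W1 Ps_pos M]) (use True in \<open>simp add: S2_def L_def\<close>)
    then show ?thesis using True by (simp add: Jsplit mult.commute)
  next
    case False
    then show ?thesis using Q2nn B1nn lam by (simp add: e_def)
  qed
  have T1: "code_prob n M W1 W2 f (\<lambda>j y1 y2. S1 j y1 y2 \<le> L \<and> g1 y1 = j) \<le> e"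
  proof -
    have "code_prob n M W1 W2 f (\<lambda>j y1 y2. S1 j y1 y2 \<le> L \<and> g1 y1 = j)
        \<le> (\<Sum>j\<in>{1..M}. \<Sum>y1\<in>LN. \<Sum>y2\<in>LN. if g1 y1 = j then e * Q1 y1 * B2 j y1 y2 else 0)"
      unfolding cp by (intro sum_mono pb1)
    also have "\<dots> = (\<Sum>j\<in>{1..M}. \<Sum>y1\<in>LN. if g1 y1 = j then e * Q1 y1 * (\<Sum>y2\<in>LN. B2 j y1 y2) else 0)"
      by (intro sum.cong refl) (auto simp: sum_distrib_left)
    also have "\<dots> = (\<Sum>j\<in>{1..M}. \<Sum>y1\<in>LN. if g1 y1 = j then e * Q1 y1 else 0)"
      by (intro sum.cong refl) (simp add: sB2)
    also have "\<dots> = (\<Sum>y1\<in>LN. \<Sum>j\<in>{1..M}. if g1 y1 = j then e * Q1 y1 else 0)"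
      by (rule sum.swap)
    also have "\<dots> = (\<Sum>y1\<in>LN. if g1 y1 \<in> {1..M} then e * Q1 y1 else 0)"
      by (simp add: sum.delta)
    also have "\<dots> \<le> (\<Sum>y1\<in>LN. e * Q1 y1)"
      by (intro sum_mono) (use Q1nn in \<open>auto simp: e_def\<close>)
    also have "\<dots> = e" by (simp add: sum_distrib_left[symmetric] sQ1)
    finally show ?thesis .
  qed
  have T2: "code_prob n M W1 W2 f (\<lambda>j y1 y2. S2 j y1 y2 \<le> L \<and> g2 y2 = j) \<le> e"
  proof -
    have "code_prob n M W1 W2 f (\<lambda>j y1 y2. S2 j y1 y2 \<le> L \<and> g2 y2 = j)
        \<le> (\<Sum>j\<in>{1..M}. \<Sum>y1\<in>LN. \<Sum>y2\<in>LN. if g2 y2 = j then e * Q2 y2 * B1 j y1 y2 else 0)"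
      unfolding cp by (intro sum_mono pb2)
    also have "\<dots> = (\<Sum>j\<in>{1..M}. \<Sum>y2\<in>LN. \<Sum>y1\<in>LN. if g2 y2 = j then e * Q2 y2 * B1 j y1 y2 else 0)"
      by (rule sum.cong[OF refl], rule sum.swap)
    also have "\<dots> = (\<Sum>j\<in>{1..M}. \<Sum>y2\<in>LN. if g2 y2 = j then e * Q2 y2 * (\<Sum>y1\<in>LN. B1 j y1 y2) else 0)"
      by (intro sum.cong refl) (auto simp: sum_distrib_left)
    also have "\<dots> = (\<Sum>j\<in>{1..M}. \<Sum>y2\<in>LN. if g2 y2 = j then e * Q2 y2 else 0)"
      by (intro sum.cong refl) (simp add: sB1)
    also have "\<dots> = (\<Sum>y2\<in>LN. \<Sum>j\<in>{1..M}. if g2 y2 = j then e * Q2 y2 else 0)"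
      by (rule sum.swap)
    also have "\<dots> = (\<Sum>y2\<in>LN. if g2 y2 \<in> {1..M} then e * Q2 y2 else 0)"
      by (simp add: sum.delta)
    also have "\<dots> \<le> (\<Sum>y2\<in>LN. e * Q2 y2)"
      by (intro sum_mono) (use Q2nn in \<open>auto simp: e_def\<close>)
    also have "\<dots> = e" by (simp add: sum_distrib_left[symmetric] sQ2)
    finally show ?thesis .
  qed
  define E where "E j y1 y2 = (\<eta> * S1 j y1 y2 + (1 - \<eta>) * S2 j y1 y2 \<le> L)" for j y1 y2
  have pw: "(if E j y1 y2 then J j y1 y2 else 0)
     \<le> (if g1 y1 \<noteq> j then J j y1 y2 else 0) + (if g2 y2 \<noteq> j then J j y1 y2 else 0)
       + ((if S1 j y1 y2 \<le> L \<and> g1 y1 = j then J j y1 y2 else 0)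
       + (if S2 j y1 y2 \<le> L \<and> g2 y2 = j then J j y1 y2 else 0))" for j y1 y2
  proof (cases "E j y1 y2")
    case True
    have "S1 j y1 y2 \<le> L \<or> S2 j y1 y2 \<le> L"
    proof (rule ccontr)
      assume "\<not> ?thesis"
      hence a: "S1 j y1 y2 > L" "S2 j y1 y2 > L" by auto
      have "\<eta> * S1 j y1 y2 + (1 - \<eta>) * S2 j y1 y2 > \<eta> * L + (1 - \<eta>) * L"
        using a eta by (intro add_strict_mono mult_strict_left_mono) auto
      with True show False by (simp add: E_def algebra_simps)
    qed
    then show ?thesis using J0[of j y1 y2] by auto
  next
    case False
    then show ?thesis using J0[of j y1 y2] by auto
  qed
  have "code_prob n M W1 W2 f E
      \<le> code_prob n M W1 W2 f (\<lambda>j y1 y2. g1 y1 \<noteq> j) + code_prob n M W1 W2 f (\<lambda>j y1 y2. g2 y2 \<noteq> j)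
       + (code_prob n M W1 W2 f (\<lambda>j y1 y2. S1 j y1 y2 \<le> L \<and> g1 y1 = j)
       + code_prob n M W1 W2 f (\<lambda>j y1 y2. S2 j y1 y2 \<le> L \<and> g2 y2 = j))"
    unfolding cp sum.distrib[symmetric] by (intro sum_mono pw)
  also have "\<dots> \<le> eps + eps + (e + e)"
    using code T1 T2 unfolding FLF_code_def by (intro add_mono) auto
  finally have "code_prob n M W1 W2 f E \<le> 2 * eps + 2 * e" by simp
  then show ?thesis unfolding E_def S1_def S2_def L_def e_def by simp
qed

end
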